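(* There is a dilatory $\varphi$-function $G$ such that the Orlicz--Lorentz space $L_{1,G}$ is not a quasi-Banach space.
   Context: A $\varphi$-function is a continuous, strictly increasing function $F:[0,\infty)\to[0,\infty)$ with $F(0)=0$ and $\lim_{t\to\infty}F(t)=\infty$. It is dilatory if there are $1<c_1,c_2<\infty$ with $F(c_1t)\ge c_2F(t)$ for all $t\ge0$. For a $\varphi$-function $F$ put $\tilde F(t)=1/F(1/t)$ for $t>0$ and $\tilde F(0)=0$. Functions live on $[0,\infty)$ with Lebesgue measure $\lambda$; $f^*(x)=\sup\{t:\lambda(|f|\ge t)\ge x\}$. Luxemburg functional: $\|f\|_G=\inf\{c>0:\int_0^\infty G(|f(x)|/c)\,dx\le1\}$. The space $L_{1,G}$ consists of measurable $f$ (modulo a.e. equality) with $\|f\|_{1,G}=\|f^*\circ\tilde G^{-1}\|_G<\infty$, equipped with the functional $\|\cdot\|_{1,G}$. *)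

theory Defs
  imports "HOL-Analysis.Analysis"
begin

text \<open>phi-functions on [0,\<infinity>), represented as real functions whose values on negative
  arguments are irrelevant.\<close>
definition phi_function :: "(real \<Rightarrow> real) \<Rightarrow> bool" where
  "phi_function F \<longleftrightarrow> continuous_on {0..} F \<and> strict_mono_on {0..} F \<and> F 0 = 0
     \<and> (\<forall>t\<ge>0. F t \<ge> 0) \<and> filterlim F at_top at_top"

definition dilatory :: "(real \<Rightarrow> real) \<Rightarrow> bool" where
  "dilatory F \<longleftrightarrow> (\<exists>c1 c2. 1 < c1 \<and> 1 < c2 \<and> (\<forall>t\<ge>0. F (c1 * t) \<ge> c2 * F t))"

definition phi_tilde :: "(real \<Rightarrow> real) \<Rightarrow> real \<Rightarrow> real" where
  "phi_tilde F t = (if t = 0 then 0 else 1 / F (1 / t))"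

definition phi_inv :: "(real \<Rightarrow> real) \<Rightarrow> real \<Rightarrow> real" where
  "phi_inv F y = (THE x. 0 \<le> x \<and> F x = y)"

definition rearr :: "(real \<Rightarrow> real) \<Rightarrow> real \<Rightarrow> ereal" where
  "rearr f x = Sup {ereal t | t. emeasure (lebesgue_on {0..}) {y \<in> {0..}. t \<le> \<bar>f y\<bar>} \<ge> ennreal x}"

definition G_ext :: "(real \<Rightarrow> real) \<Rightarrow> ereal \<Rightarrow> ennreal" where
  "G_ext G u = (case u of ereal r \<Rightarrow> ennreal (G r) | PInfty \<Rightarrow> \<infinity> | MInfty \<Rightarrow> 0)"

text \<open>Luxemburg functional (inf of the empty set is \<infinity>).\<close>
definition luxemburg :: "(real \<Rightarrow> real) \<Rightarrow> (real \<Rightarrow> ereal) \<Rightarrow> ennreal" where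
  "luxemburg G h = Inf {ennreal c | c. c > 0 \<and>
       (\<integral>\<^sup>+ x \<in> {0..}. G_ext G (h x / ereal c) \<partial>lebesgue) \<le> 1}"

definition norm_1G :: "(real \<Rightarrow> real) \<Rightarrow> (real \<Rightarrow> real) \<Rightarrow> ennreal" where
  "norm_1G G f = luxemburg G (\<lambda>x. rearr f (phi_inv (phi_tilde G) x))"

definition L_1G :: "(real \<Rightarrow> real) \<Rightarrow> (real \<Rightarrow> real) set" where
  "L_1G G = {f. f \<in> borel_measurable (lebesgue_on {0..}) \<and> norm_1G G f < \<infinity>}"

text \<open>A set V of (representatives of a.e.-classes of) functions on [0,\<infinity>) with a functional N
  is a quasi-Banach space: V is a linear space, N is a quasi-norm on the quotient modulo
  a.e. equality, and V is complete with respect to N.\<close>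
definition quasi_banach :: "(real \<Rightarrow> real) set \<Rightarrow> ((real \<Rightarrow> real) \<Rightarrow> ennreal) \<Rightarrow> bool" where
  "quasi_banach V N \<longleftrightarrow>
     (\<forall>f\<in>V. \<forall>g\<in>V. (\<lambda>x. f x + g x) \<in> V) \<and>
     (\<forall>f\<in>V. \<forall>a::real. (\<lambda>x. a * f x) \<in> V) \<and>
     (\<forall>f\<in>V. N f < \<infinity>) \<and>
     (\<forall>f\<in>V. N f = 0 \<longleftrightarrow> (AE x in lebesgue_on {0..}. f x = 0)) \<and>
     (\<forall>f\<in>V. \<forall>a::real. N (\<lambda>x. a * f x) = ennreal \<bar>a\<bar> * N f) \<and>
     (\<exists>C::real. C \<ge> 1 \<and> (\<forall>f\<in>V. \<forall>g\<in>V. N (\<lambda>x. f x + g x) \<le> ennreal C * (N f + N g))) \<and>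
     (\<forall>u::nat \<Rightarrow> real \<Rightarrow> real. (\<forall>n. u n \<in> V) \<longrightarrow>
        (\<forall>e>0. \<exists>M. \<forall>n\<ge>M. \<forall>m\<ge>M. N (\<lambda>x. u n x - u m x) < e) \<longrightarrow>
        (\<exists>f\<in>V. (\<lambda>n. N (\<lambda>x. u n x - f x)) \<longlonglongrightarrow> 0))"

end

theory Submission
  imports Defs
begin


definition sq :: "nat \<Rightarrow> real" where "sq j = 4 ^ (j^2)"
definition tt :: "nat \<Rightarrow> real" where "tt j = 1 / sq j"
definition ww :: "nat \<Rightarrow> real" where "ww i = (1/2) ^ (i^2)"
definition ramp :: "nat \<Rightarrow> real \<Rightarrow> real" where
  "ramp i t = max 0 (min 1 (6 * t * sq i - 3))"
definition RR :: "real \<Rightarrow> real" where "RR t = (\<Sum>i. ww i * ramp i t)"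
definition GG :: "real \<Rightarrow> real" where "GG t = t * RR t"

lemma sq_pos: "sq j > 0" by (simp add: sq_def)
lemma tt_pos: "tt j > 0" by (simp add: tt_def sq_pos)
lemma sq_mono: "i \<le> j \<Longrightarrow> sq i \<le> sq j"
  unfolding sq_def by (intro power_increasing) (auto simp: power_mono)
lemma sq_Suc: "sq (Suc j) = 4 ^ (2*j+1) * sq j"
proof -
  have "(Suc j)^2 = (2*j+1) + j^2" by (simp add: power2_eq_square)
  then show ?thesis unfolding sq_def by (simp add: power_add)
qed
lemma sq_Suc_ge: "sq (Suc j) \<ge> 4 * sq j"
proof -
  have "(4::real) ^ (2*j+1) \<ge> 4 ^ 1" by (intro power_increasing) auto
  then show ?thesis using sq_Suc[of j] sq_pos[of j] by (simp add: mult_right_mono)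
qed
lemma sq_ge: "sq j \<ge> real j + 1"
proof (induction j)
  case 0 then show ?case by (simp add: sq_def)
next
  case (Suc j) then show ?case using sq_Suc_ge[of j] by simp
qed
lemma sq_Suc_ratio: "sq (Suc j) \<ge> (2*real j + 2) * sq j"
proof -
  have "(4::real) ^ (2*j+1) \<ge> real (2*j+1) + 1"
  proof -
    have "(4::real) ^ n \<ge> real n + 1" for n
      by (induction n) auto
    then show ?thesis by blast
  qed
  then have "(2*real j + 2) \<le> 4 ^ (2*j+1)" by simp
  then have "(2*real j + 2) * sq j \<le> 4 ^ (2*j+1) * sq j" using sq_pos[of j] by (intro mult_right_mono) auto
  then show ?thesis using sq_Suc[of j] by simp
qed

lemma ww_pos: "ww i > 0" by (simp add: ww_def)
lemma ww_le: "ww i \<le> (1/2)^i"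
  unfolding ww_def by (rule power_decreasing) (auto simp: power2_eq_square)
lemma ww_Suc: "ww (Suc i) = ww i * (1/2)^(2*i+1)"
proof -
  have "(Suc i)^2 = i^2 + (2*i+1)" by (simp add: power2_eq_square)
  then show ?thesis unfolding ww_def by (simp add: power_add)
qed
lemma ww_Suc_le: "ww (Suc i) \<le> ww i / 2"
proof -
  have "(1/2::real)^(2*i+1) \<le> (1/2)^1" by (rule power_decreasing) auto
  then show ?thesis using ww_Suc[of i] ww_pos[of i] by (simp add: mult_left_mono)
qed
lemma ww_shift: "ww (k + Suc j) \<le> ww (Suc j) * (1/2)^k"
proof (induction k)
  case 0 then show ?case by simp
next
  case (Suc k)
  have "ww (Suc k + Suc j) = ww (Suc (k + Suc j))" by simp
  also have "\<dots> \<le> ww (k + Suc j) / 2" by (rule ww_Suc_le)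
  also have "\<dots> \<le> ww (Suc j) * (1/2)^k / 2" using Suc by simp
  finally show ?case by simp
qed

lemma ramp_bounds: "0 \<le> ramp i t" "ramp i t \<le> 1" by (auto simp: ramp_def)
lemma ramp_mono: "s \<le> t \<Longrightarrow> ramp i s \<le> ramp i t"
proof -
  assume "s \<le> t"
  then have "6 * s * sq i \<le> 6 * t * sq i" using sq_pos[of i] by (simp add: mult_right_mono)
  then show ?thesis unfolding ramp_def by (intro max.mono min.mono) auto
qed
lemma ramp_zero: "t \<le> tt i / 2 \<Longrightarrow> ramp i t = 0"
  unfolding ramp_def tt_def using sq_pos[of i]
  by (auto simp: field_simps)
lemma ramp_one: "t \<ge> 2 * tt i / 3 \<Longrightarrow> ramp i t = 1"
  unfolding ramp_def tt_def using sq_pos[of i]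
  by (auto simp: field_simps)

lemma summable_ww: "summable ww"
  by (rule summable_comparison_test[OF _ summable_geometric[of "1/2::real"]])
     (use ww_le ww_pos in \<open>auto intro!: exI[of _ 0] simp: less_imp_le\<close>)

lemma summable_R: "summable (\<lambda>i. ww i * ramp i t)"
  by (rule summable_comparison_test[OF _ summable_ww])
     (auto intro!: exI[of _ 0] simp: ramp_bounds ww_pos less_imp_le mult_le_cancel_left1 abs_mult)

lemma sum_ww_le: "(\<Sum>i. ww i) \<le> 2"
proof -
  have "(\<Sum>i. ww i) \<le> (\<Sum>i. (1/2::real)^i)"
    by (rule suminf_le) (auto simp: ww_le summable_ww)
  also have "\<dots> = 2" using suminf_geometric[of "1/2::real"] by simp
  finally show ?thesis .
qed

lemma RR_nonneg: "RR t \<ge> 0"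
  unfolding RR_def by (rule suminf_nonneg[OF summable_R]) (simp add: ramp_bounds ww_pos less_imp_le)

lemma RR_le2: "RR t \<le> 2"
proof -
  have "RR t \<le> (\<Sum>i. ww i)" unfolding RR_def
    by (rule suminf_le[OF _ summable_R summable_ww]) (simp add: ramp_bounds ww_pos less_imp_le mult_le_cancel_left1)
  then show ?thesis using sum_ww_le by simp
qed

lemma RR_mono: "s \<le> t \<Longrightarrow> RR s \<le> RR t"
  unfolding RR_def by (rule suminf_le[OF _ summable_R summable_R]) (simp add: ramp_mono ww_pos mult_left_mono less_imp_le)

lemma RR_ge: "t \<ge> 2 * tt j / 3 \<Longrightarrow> RR t \<ge> ww j"
proof -
  assume a: "t \<ge> 2 * tt j / 3"
  have "(\<Sum>i\<in>{j}. ww i * ramp i t) \<le> RR t" unfolding RR_def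
    by (rule sum_le_suminf[OF summable_R]) (auto simp: ramp_bounds ww_pos less_imp_le)
  then show ?thesis using ramp_one[OF a] by simp
qed

lemma RR_le: assumes "t \<le> tt j / 2" shows "RR t \<le> 2 * ww (Suc j)"
proof -
  have z: "i \<le> j \<Longrightarrow> ramp i t = 0" for i
  proof -
    assume "i \<le> j"
    then have "sq i \<le> sq j" by (rule sq_mono)
    then have "tt j \<le> tt i" unfolding tt_def using sq_pos[of i] by (simp add: frac_le)
    then show ?thesis using assms by (intro ramp_zero) simp
  qed
  have "RR t = (\<Sum>k. ww (k + Suc j) * ramp (k + Suc j) t)"
    unfolding RR_def
    using suminf_split_initial_segment[OF summable_R[of t], of "Suc j"] z by simp
  also have "\<dots> \<le> (\<Sum>k. ww (Suc j) * (1/2)^k)"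
  proof (rule suminf_le)
    show "summable (\<lambda>k. ww (k + Suc j) * ramp (k + Suc j) t)"
      using summable_R summable_iff_shift[of "\<lambda>i. ww i * ramp i t" "Suc j"] by simp
    show "summable (\<lambda>k. ww (Suc j) * (1/2::real)^k)" by (intro summable_mult summable_geometric) simp
    fix k
    have "ww (k + Suc j) * ramp (k + Suc j) t \<le> ww (k + Suc j)"
      using ramp_bounds[of "k + Suc j" t] ww_pos[of "k + Suc j"] by (simp add: mult_le_cancel_left1)
    also have "\<dots> \<le> ww (Suc j) * (1/2)^k" by (rule ww_shift)
    finally show "ww (k + Suc j) * ramp (k + Suc j) t \<le> ww (Suc j) * (1/2)^k" .
  qed
  also have "\<dots> = 2 * ww (Suc j)"
    using suminf_mult[OF summable_geometric[of "1/2::real"], of "ww (Suc j)"] suminf_geometric[of "1/2::real"] by simp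
  finally show ?thesis .
qed

lemma tt_small: "\<exists>j. tt j \<le> e" if "e > 0" for e :: real
proof -
  obtain n :: nat where n: "1 / e < real n" using reals_Archimedean2 by blast
  have "sq n \<ge> real n + 1" by (rule sq_ge)
  then have "sq n \<ge> 1/e" using n by simp
  then have "tt n \<le> e" unfolding tt_def using that sq_pos[of n]
    by (simp add: field_simps)
  then show ?thesis by blast
qed

lemma RR_pos: "t > 0 \<Longrightarrow> RR t > 0"
proof -
  assume t: "t > 0"
  obtain j where "tt j \<le> t" using tt_small[OF t] by blast
  then have "RR t \<ge> ww j" using tt_pos[of j] by (intro RR_ge) simp
  then show ?thesis using ww_pos[of j] by simp
qed

lemma ramp_cont: "continuous_on UNIV (ramp i)"
  unfolding ramp_def by (intro continuous_intros)

lemma RR_cont: "continuous_on UNIV RR"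
proof (rule uniform_limit_theorem[where F=sequentially])
  show "uniform_limit UNIV (\<lambda>n x. \<Sum>i<n. ww i * ramp i x) RR sequentially"
    unfolding RR_def
    by (rule Weierstrass_m_test[OF _ summable_ww])
       (simp add: abs_mult ramp_bounds ww_pos less_imp_le mult_le_cancel_left1)
  show "\<forall>\<^sub>F n in sequentially. continuous_on UNIV (\<lambda>x. \<Sum>i<n. ww i * ramp i x)"
    using ramp_cont by (auto intro!: continuous_intros always_eventually
        intro: continuous_on_compose2[OF ramp_cont])
qed auto

lemma GG_cont: "continuous_on S GG"
  unfolding GG_def
  by (intro continuous_intros continuous_on_subset[OF RR_cont]) auto

lemma GG_nonneg: "t \<ge> 0 \<Longrightarrow> GG t \<ge> 0"
  by (simp add: GG_def RR_nonneg)
lemma GG_pos: "t > 0 \<Longrightarrow> GG t > 0"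
  by (simp add: GG_def RR_pos)
lemma GG_zero_neg: "t \<le> 0 \<Longrightarrow> GG t = 0"
proof -
  assume "t \<le> 0"
  then have "ramp i t = 0" for i using tt_pos[of i] by (intro ramp_zero) simp
  then show ?thesis by (simp add: GG_def RR_def)
qed
lemma GG_strict: "0 \<le> s \<Longrightarrow> s < t \<Longrightarrow> GG s < GG t"
proof -
  assume a: "0 \<le> s" "s < t"
  have "GG s = s * RR s" by (simp add: GG_def)
  also have "\<dots> \<le> s * RR t" using a RR_mono[of s t] by (intro mult_left_mono) auto
  also have "\<dots> < t * RR t" using a RR_pos[of t] by (intro mult_strict_right_mono) auto
  finally show ?thesis by (simp add: GG_def)
qed
lemma GG_mono: "s \<le> t \<Longrightarrow> GG s \<le> GG t"
proof -
  assume a: "s \<le> t"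
  show ?thesis
  proof (cases "s \<le> 0")
    case True then show ?thesis using GG_zero_neg[OF True] GG_nonneg[of t] GG_zero_neg[of t] by (cases "t \<ge> 0") auto
  next
    case False then show ?thesis using GG_strict[of s t] a by (cases "s = t") auto
  qed
qed
lemma GG_ge_lin: "t \<ge> 2/3 \<Longrightarrow> GG t \<ge> t"
proof -
  assume a: "t \<ge> 2/3"
  have "RR t \<ge> ww 0" by (rule RR_ge) (use a in \<open>simp add: tt_def sq_def\<close>)
  then have "RR t \<ge> 1" by (simp add: ww_def)
  then show ?thesis using a by (simp add: GG_def mult_le_cancel_left1)
qed
lemma GG_le_lin: "t \<ge> 0 \<Longrightarrow> GG t \<le> 2 * t"
  using RR_le2[of t] by (simp add: GG_def mult_left_mono mult.commute)

lemma phi_GG: "phi_function GG"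
  unfolding phi_function_def
proof (intro conjI allI impI)
  show "continuous_on {0..} GG" by (rule GG_cont)
  show "strict_mono_on {0..} GG" unfolding strict_mono_on_def using GG_strict by auto
  show "GG 0 = 0" by (simp add: GG_def)
  show "0 \<le> GG t" if "0 \<le> t" for t using that by (rule GG_nonneg)
  show "filterlim GG at_top at_top"
    by (rule filterlim_at_top_mono[OF filterlim_ident]) (auto intro: GG_ge_lin eventually_at_top_linorderI[of "2/3"])
qed

lemma dil_GG: "dilatory GG"
  unfolding dilatory_def
proof (intro exI[of _ 2] conjI allI impI)
  fix t :: real assume "0 \<le> t"
  then show "2 * GG t \<le> GG (2 * t)" unfolding GG_def using RR_mono[of t "2*t"] RR_nonneg[of t]
    by (simp add: mult_left_mono)
qed auto



abbreviation "WW \<equiv> phi_tilde GG"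

lemma WW_pos_eq: "s \<noteq> 0 \<Longrightarrow> WW s = 1 / GG (1/s)" by (simp add: phi_tilde_def)
lemma WW_pos: "s > 0 \<Longrightarrow> WW s > 0" by (simp add: phi_tilde_def GG_pos)
lemma WW_strict: "0 \<le> s \<Longrightarrow> s < s' \<Longrightarrow> WW s < WW s'"
proof -
  assume a: "0 \<le> s" "s < s'"
  show ?thesis
  proof (cases "s = 0")
    case True then show ?thesis using WW_pos[of s'] a by (simp add: phi_tilde_def)
  next
    case False
    then have "GG (1/s') < GG (1/s)" using a by (intro GG_strict) (auto simp: frac_less2)
    then show ?thesis using False a GG_pos[of "1/s'"] by (simp add: phi_tilde_def frac_less2)
  qed
qed
lemma WW_mono: "0 \<le> s \<Longrightarrow> s \<le> s' \<Longrightarrow> WW s \<le> WW s'"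
  using WW_strict by (cases "s = s'") (auto intro: less_imp_le)

lemma WW_exists: assumes x: "x > 0" shows "\<exists>s>0. WW s = x"
proof -
  define a where "a = min 1 x"
  define b where "b = 2 * x"
  have a0: "a > 0" and ab: "a \<le> b" using x by (auto simp: a_def b_def)
  have "a \<le> 1" by (simp add: a_def)
  then have "1/a \<ge> 1" using a0 by simp
  then have "GG (1/a) \<ge> 1/a" by (intro GG_ge_lin) simp
  moreover have "1/a \<ge> 1/x" using x a0 by (simp add: a_def frac_le)
  ultimately have "GG (1/a) \<ge> 1/x" by simp
  then have Wa: "WW a \<le> x" using x a0 GG_pos[of "1/a"] by (simp add: WW_pos_eq field_simps)
  have "GG (1/b) \<le> 2 * (1/b)" using x by (intro GG_le_lin) (simp add: b_def)
  then have "GG (1/b) \<le> 1/x" by (simp add: b_def)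
  then have Wb: "WW b \<ge> x" using x GG_pos[of "1/b"] by (simp add: WW_pos_eq b_def field_simps)
  have c1: "continuous_on {a..b} (\<lambda>s. 1/s)" using a0 by (intro continuous_intros) auto
  have c2: "continuous_on {a..b} (\<lambda>s. GG (1/s))" by (rule continuous_on_compose2[OF GG_cont c1]) auto
  have "continuous_on {a..b} (\<lambda>s. 1 / GG (1/s))"
    using a0 by (intro continuous_intros c2) (auto intro!: GG_pos[THEN less_imp_neq, symmetric])
  then have "continuous_on {a..b} WW"
    by (rule continuous_on_cong[THEN iffD1, rotated 2]) (use a0 in \<open>auto simp: WW_pos_eq\<close>)
  from IVT'[of WW a x b, OF Wa Wb ab this] obtain s where "a \<le> s" "s \<le> b" "WW s = x" by blast
  then show ?thesis using a0 by (intro exI[of _ s]) auto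
qed

lemma phi_inv_WW: assumes x: "x > 0"
  shows "phi_inv WW x > 0" "WW (phi_inv WW x) = x"
proof -
  obtain s where s: "s > 0" "WW s = x" using WW_exists[OF x] by blast
  have "phi_inv WW x = s" unfolding phi_inv_def
  proof (rule the_equality)
    show "0 \<le> s \<and> WW s = x" using s by simp
    fix s' assume "0 \<le> s' \<and> WW s' = x"
    then show "s' = s" using WW_strict[of s s'] WW_strict[of s' s] s by (cases "s' < s"; cases "s < s'") auto
  qed
  then show "phi_inv WW x > 0" "WW (phi_inv WW x) = x" using s by auto
qed

lemma phi_inv_le: "x > 0 \<Longrightarrow> K > 0 \<Longrightarrow> x \<le> WW K \<Longrightarrow> phi_inv WW x \<le> K"
  using phi_inv_WW[of x] WW_strict[of K "phi_inv WW x"] by force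
lemma phi_inv_gt: "x > 0 \<Longrightarrow> K \<ge> 0 \<Longrightarrow> x > WW K \<Longrightarrow> phi_inv WW x > K"
  using phi_inv_WW[of x] WW_mono[of "phi_inv WW x" K] by force

lemma WW_sq: "WW (c * sq j) = 1 / GG (tt j / c)" if "c > 0"
  using that sq_pos[of j] by (simp add: WW_pos_eq tt_def mult.commute)



lemma lvl_meas: fixes f :: "real \<Rightarrow> real" shows "f \<in> borel_measurable (lebesgue_on {0..}) \<Longrightarrow>
    {y\<in>{0..}. t \<le> \<bar>f y\<bar>} \<in> sets (lebesgue_on {0::real..})"
proof -
  assume f: "f \<in> borel_measurable (lebesgue_on {0..})"
  have "{y \<in> space (lebesgue_on {0..}). t \<le> \<bar>f y\<bar>} \<in> sets (lebesgue_on {0::real..})"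
    using f by measurable
  then show ?thesis by simp
qed

lemma meas_lebesgue_on: fixes A B :: "real set" assumes "A \<subseteq> B" "B \<in> sets lebesgue" "B \<subseteq> {0..}"
  shows "emeasure (lebesgue_on {0..}) A \<le> emeasure lebesgue B"
proof -
  have B: "B \<in> sets (lebesgue_on {0::real..})" using assms
    by (simp add: sets_restrict_space_iff)
  have "emeasure (lebesgue_on {0..}) A \<le> emeasure (lebesgue_on {0..}) B"
    by (rule emeasure_mono[OF assms(1) B])
  also have "\<dots> = emeasure lebesgue B" using assms by (intro emeasure_restrict_space) auto
  finally show ?thesis .
qed

lemma rearr_le: fixes f :: "real \<Rightarrow> real" assumes "\<And>\<tau>. \<tau> > b \<Longrightarrow> emeasure (lebesgue_on {0..}) {y\<in>{0..}. \<tau> \<le> \<bar>f y\<bar>} < ennreal x"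
  shows "rearr f x \<le> ereal b"
  unfolding rearr_def
proof (rule Sup_least)
  fix u assume "u \<in> {ereal t |t. ennreal x \<le> emeasure (lebesgue_on {0..}) {y \<in> {0..}. t \<le> \<bar>f y\<bar>}}"
  then obtain t where u: "u = ereal t" and t: "ennreal x \<le> emeasure (lebesgue_on {0..}) {y \<in> {0..}. t \<le> \<bar>f y\<bar>}" by blast
  have "t \<le> b"
  proof (rule ccontr)
    assume "\<not> t \<le> b"
    then have "t > b" by simp
    from assms[OF this] t show False by simp
  qed
  then show "u \<le> ereal b" using u by simp
qed

lemma rearr_ge: assumes "ennreal x \<le> emeasure (lebesgue_on {0..}) {y\<in>{0..}. \<tau> \<le> \<bar>f y\<bar>}"
  shows "ereal \<tau> \<le> rearr f x"
  unfolding rearr_def by (rule Sup_upper) (use assms in blast)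

definition JJ :: "real \<Rightarrow> nat" where "JJ y = (LEAST j. y < sq j)"
definition FF :: "real \<Rightarrow> real" where "FF y = tt (JJ y)"
definition gg :: "real \<Rightarrow> real" where "gg y = FF (y/2) - FF y"

lemma JJ_ex: "\<exists>j. y < sq j"
proof -
  obtain n :: nat where "y < real n" using reals_Archimedean2 by blast
  then have "y < sq n" using sq_ge[of n] by simp
  then show ?thesis by blast
qed
lemma JJ_less: "y < sq (JJ y)" unfolding JJ_def by (rule LeastI_ex[OF JJ_ex])
lemma JJ_le: "y < sq j \<Longrightarrow> JJ y \<le> j" unfolding JJ_def by (rule Least_le)
lemma JJ_gt: "sq j \<le> y \<Longrightarrow> j < JJ y"
proof (rule ccontr)
  assume "sq j \<le> y" "\<not> j < JJ y"
  then have "sq (JJ y) \<le> sq j" by (intro sq_mono) simp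
  then show False using JJ_less[of y] \<open>sq j \<le> y\<close> by simp
qed
lemma JJ_mono: "y \<le> y' \<Longrightarrow> JJ y \<le> JJ y'"
  using JJ_le JJ_less[of y'] by force

lemma tt_anti: "i \<le> j \<Longrightarrow> tt j \<le> tt i"
  unfolding tt_def using sq_mono[of i j] sq_pos[of i] by (simp add: frac_le)

lemma FF_le: "sq j \<le> y \<Longrightarrow> FF y \<le> tt (Suc j)"
  unfolding FF_def using JJ_gt by (intro tt_anti) (simp add: Suc_le_eq)
lemma FF_ge: "y < sq j \<Longrightarrow> FF y \<ge> tt j"
  unfolding FF_def using JJ_le by (intro tt_anti) simp
lemma FF_pos: "FF y > 0" by (simp add: FF_def tt_pos)
lemma FF_le1: "FF y \<le> tt 0" unfolding FF_def by (rule tt_anti) simp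
lemma FF_anti: "y \<le> y' \<Longrightarrow> FF y' \<le> FF y"
  unfolding FF_def by (intro tt_anti JJ_mono)

lemma FF_meas: "FF \<in> borel_measurable (lebesgue_on S)"
proof -
  have "mono (\<lambda>y. - FF y)" unfolding mono_def using FF_anti by simp
  then have "(\<lambda>y. - FF y) \<in> borel_measurable borel" by (rule borel_measurable_mono)
  then have "(\<lambda>y. - (- FF y)) \<in> borel_measurable borel" by measurable
  then have "FF \<in> borel_measurable borel" by simp
  then show ?thesis by (simp add: measurable_restrict_space1 measurable_completion measurable_lborel1)
qed

lemma FF2_meas: "(\<lambda>y. FF (y/2)) \<in> borel_measurable (lebesgue_on S)"
proof -
  have "mono (\<lambda>y. - FF (y/2))" unfolding mono_def using FF_anti by simp
  then have "(\<lambda>y. - FF (y/2)) \<in> borel_measurable borel" by (rule borel_measurable_mono)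
  then have "(\<lambda>y. - (- FF (y/2))) \<in> borel_measurable borel" by measurable
  then have "(\<lambda>y. FF (y/2)) \<in> borel_measurable borel" by simp
  then show ?thesis by (simp add: measurable_restrict_space1 measurable_completion measurable_lborel1)
qed

lemma gg_meas: "gg \<in> borel_measurable (lebesgue_on S)"
  unfolding gg_def using FF_meas FF2_meas by measurable

lemma gg_nonneg: "y \<ge> 0 \<Longrightarrow> gg y \<ge> 0"
  unfolding gg_def using FF_anti[of "y/2" y] by simp

lemma gg_le: "y \<ge> 0 \<Longrightarrow> gg y \<le> tt 0"
  unfolding gg_def using FF_le1[of "y/2"] FF_pos[of y] by simp

lemma gg_level: assumes y: "y \<ge> 0" and tau: "tt (Suc j) < \<tau>" "\<tau> \<le> \<bar>gg y\<bar>"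
  shows "y < sq j / 2 \<or> (sq j \<le> y \<and> y < 2 * sq j)"
proof -
  have g: "gg y \<ge> \<tau>" using tau gg_nonneg[OF y] by simp
  have tp: "\<tau> > 0" using tau(1) tt_pos[of "Suc j"] by simp
  have "y < 2 * sq j"
  proof (rule ccontr)
    assume "\<not> y < 2 * sq j"
    then have "FF (y/2) \<le> tt (Suc j)" by (intro FF_le) simp
    then have "gg y < \<tau>" using tau(1) FF_pos[of y] unfolding gg_def by simp
    then show False using g by simp
  qed
  moreover have "\<not> (sq j / 2 \<le> y \<and> y < sq j)"
  proof
    assume a: "sq j / 2 \<le> y \<and> y < sq j"
    have "JJ y \<le> j" using a by (intro JJ_le) simp
    moreover have "JJ (y/2) \<le> JJ y" using y by (intro JJ_mono) simp
    moreover have "j \<le> JJ (y/2)"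
    proof (cases j)
      case 0 then show ?thesis by simp
    next
      case (Suc i)
      have "sq (Suc i) \<ge> 4 * sq i" by (rule sq_Suc_ge)
      then have "sq i \<le> y/2" using a Suc by simp
      then have "i < JJ (y/2)" by (rule JJ_gt)
      then show ?thesis using Suc by simp
    qed
    ultimately have "JJ (y/2) = JJ y" by simp
    then have "gg y = 0" unfolding gg_def FF_def by simp
    then show False using g tp by simp
  qed
  ultimately show ?thesis by force
qed



lemma G_ext_le: "v \<le> ereal a \<Longrightarrow> G_ext GG v \<le> ennreal (GG a)"
proof (cases v)
  case (real r)
  assume "v \<le> ereal a"
  then have "r \<le> a" using real by simp
  then show ?thesis using real GG_mono[of r a] by (simp add: G_ext_def ennreal_leI)
next
  case PInf
  assume "v \<le> ereal a" then show ?thesis using PInf by simp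
next
  case MInf
  then show ?thesis by (simp add: G_ext_def)
qed

lemma G_ext_ge: "ereal a \<le> v \<Longrightarrow> ennreal (GG a) \<le> G_ext GG v"
proof (cases v)
  case (real r)
  assume "ereal a \<le> v"
  then have "a \<le> r" using real by simp
  then show ?thesis using real GG_mono[of a r] by (simp add: G_ext_def ennreal_leI)
next
  case PInf
  then show ?thesis by (simp add: G_ext_def)
next
  case MInf
  assume "ereal a \<le> v" then show ?thesis using MInf by simp
qed

lemma ediv_le: "u \<le> ereal b \<Longrightarrow> c > 0 \<Longrightarrow> u / ereal c \<le> ereal (b / c)"
  using ereal_divide_right_mono[of u "ereal b" "ereal c"] by simp
lemma ediv_ge: "ereal b \<le> u \<Longrightarrow> c > 0 \<Longrightarrow> ereal (b / c) \<le> u / ereal c"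
  using ereal_divide_right_mono[of "ereal b" u "ereal c"] by simp

lemma GG_tt_half: "GG (tt j / 2) \<le> tt j * ww (Suc j)"
proof -
  have "RR (tt j / 2) \<le> 2 * ww (Suc j)" by (rule RR_le) simp
  then show ?thesis unfolding GG_def using tt_pos[of j] by (simp add: mult_left_mono)
qed

lemma GG_ge_ww: "t \<ge> 2 * tt j / 3 \<Longrightarrow> GG t \<ge> t * ww j"
proof -
  assume a: "t \<ge> 2 * tt j / 3"
  then have "t \<ge> 0" using tt_pos[of j] by simp
  then show ?thesis unfolding GG_def using RR_ge[OF a] by (simp add: mult_left_mono)
qed

lemma term_upper: "GG (tt i / 2) * WW (3/2 * sq i) \<le> 3/4 * (1/4)^i"
proof -
  have e: "tt i / (3/2) = 2 * tt i / 3" by simp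
  have W: "WW (3/2 * sq i) = 1 / GG (2 * tt i / 3)" using WW_sq[of "3/2" i] unfolding e by simp
  have g1: "GG (2 * tt i / 3) \<ge> (2 * tt i / 3) * ww i" by (rule GG_ge_ww) simp
  have p: "(2 * tt i / 3) * ww i > 0" using tt_pos[of i] ww_pos[of i] by simp
  have g0: "GG (tt i / 2) \<ge> 0" using tt_pos[of i] by (intro GG_nonneg) simp
  have q: "1 / GG (2 * tt i / 3) \<le> 1 / ((2 * tt i / 3) * ww i)"
    by (rule divide_left_mono[OF g1]) (use g1 p in auto)
  have "GG (tt i / 2) * WW (3/2 * sq i) \<le> (tt i * ww (Suc i)) * (1 / ((2 * tt i / 3) * ww i))"
    unfolding W using g0 q p GG_tt_half[of i] GG_nonneg[of "2 * tt i / 3"] tt_pos[of i]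
    by (intro mult_mono) auto
  also have "\<dots> = 3/2 * (ww (Suc i) / ww i)" using tt_pos[of i] ww_pos[of i] by (simp add: field_simps)
  also have "ww (Suc i) / ww i = (1/2)^(2*i+1)" using ww_Suc[of i] ww_pos[of i] by simp
  also have "(1/2::real)^(2*i+1) = 1/2 * (1/4)^i"
  proof -
    have "(1/2::real)^(2*i) = ((1/2)^2)^i" by (rule power_mult)
    also have "(1/2::real)^2 = 1/4" by (simp add: power2_eq_square)
    finally show ?thesis by simp
  qed
  finally show ?thesis by simp
qed

lemma norm_upper:
  fixes f :: "real \<Rightarrow> real"
  assumes a0: "\<And>x. x > 0 \<Longrightarrow> rearr f x \<le> ereal (tt 0)"
    and aj: "\<And>j x. x > 3/2 * sq j \<Longrightarrow> rearr f x \<le> ereal (tt (Suc j))"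
  shows "norm_1G GG f \<le> 2"
proof -
  define h where "h x = rearr f (phi_inv WW x)" for x
  define B where "B i x = ennreal (GG (tt i / 2)) * indicator {0..WW (3/2 * sq i)} x" for i x
  have pw: "G_ext GG (h x / ereal 2) * indicator {0..} x \<le> (\<Sum>i. B i x)" if x0: "x \<noteq> 0" for x
  proof (cases "x \<ge> 0")
    case False then show ?thesis by simp
  next
    case True
    then have x: "x > 0" using x0 by simp
    define s where "s = phi_inv WW x"
    have s: "s > 0" "WW s = x" using phi_inv_WW[OF x] by (auto simp: s_def)
    have ex: "\<exists>j. s \<le> 3/2 * sq j"
    proof -
      obtain j where "s < sq j" using JJ_ex[of s] by blast
      then have "s \<le> 3/2 * sq j" using sq_pos[of j] by simp
      then show ?thesis by blast
    qed
    define j where "j = (LEAST j. s \<le> 3/2 * sq j)"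
    have sj: "s \<le> 3/2 * sq j" unfolding j_def by (rule LeastI_ex[OF ex])
    have hj: "h x \<le> ereal (tt j)"
    proof (cases j)
      case 0 then show ?thesis using a0[OF s(1)] by (simp add: h_def s_def)
    next
      case (Suc i)
      have "i < j" using Suc by simp
      then have "\<not> s \<le> 3/2 * sq i" unfolding j_def by (rule not_less_Least)
      then have "s > 3/2 * sq i" by simp
      then show ?thesis using aj[of i s] Suc by (simp add: h_def s_def)
    qed
    have xj: "x \<le> WW (3/2 * sq j)" using s sj by (metis WW_mono less_imp_le)
    have "G_ext GG (h x / ereal 2) \<le> ennreal (GG (tt j / 2))"
      by (rule G_ext_le) (rule ediv_le[OF hj], simp)
    also have "\<dots> = B j x" using xj True by (simp add: B_def)
    also have "\<dots> = (\<Sum>i\<in>{j}. B i x)" by simp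
    also have "\<dots> \<le> (\<Sum>i. B i x)"
      by (rule sum_le_suminf) (auto intro: summableI)
    finally show ?thesis using True by simp
  qed
  have "(\<integral>\<^sup>+ x\<in>{0..}. G_ext GG (h x / ereal 2) \<partial>lebesgue) \<le> (\<integral>\<^sup>+ x. (\<Sum>i. B i x) \<partial>lebesgue)"
  proof (rule nn_integral_mono_AE)
    have "AE x in lebesgue. (x::real) \<noteq> 0" by (rule AE_completion) (rule AE_lborel_singleton)
    then show "AE x in lebesgue. G_ext GG (h x / ereal 2) * indicator {0..} x \<le> (\<Sum>i. B i x)"
      by eventually_elim (rule pw)
  qed
  also have "\<dots> = (\<Sum>i. integral\<^sup>N lebesgue (B i))"
  proof (rule nn_integral_suminf)
    fix i
    have "B i \<in> borel_measurable lborel" unfolding B_def by measurable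
    then show "B i \<in> borel_measurable lebesgue" by (rule measurable_completion)
  qed
  also have "\<dots> = (\<Sum>i. ennreal (GG (tt i / 2) * WW (3/2 * sq i)))"
  proof (rule suminf_cong)
    fix i
    have w: "WW (3/2 * sq i) \<ge> 0" using sq_pos[of i] WW_pos[of "3/2 * sq i"] by simp
    have "integral\<^sup>N lebesgue (B i) = ennreal (GG (tt i / 2)) * emeasure lebesgue {0..WW (3/2 * sq i)}"
      unfolding B_def by (rule nn_integral_cmult_indicator) simp
    also have "\<dots> = ennreal (GG (tt i / 2) * WW (3/2 * sq i))"
      using w GG_nonneg[of "tt i / 2"] tt_pos[of i] by (simp add: ennreal_mult)
    finally show "integral\<^sup>N lebesgue (B i) = ennreal (GG (tt i / 2) * WW (3/2 * sq i))" .
  qed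
  also have "\<dots> \<le> (\<Sum>i. ennreal (3/4 * (1/4)^i))"
    by (intro suminf_le ennreal_leI term_upper) auto
  also have "\<dots> = ennreal (\<Sum>i. 3/4 * (1/4::real)^i)"
    by (rule suminf_ennreal2) (auto intro!: summable_mult summable_geometric)
  also have "(\<Sum>i. 3/4 * (1/4::real)^i) = 1"
    using suminf_mult[OF summable_geometric[of "1/4::real"], of "3/4"] suminf_geometric[of "1/4::real"] by simp
  finally have I: "(\<integral>\<^sup>+ x\<in>{0..}. G_ext GG (h x / ereal 2) \<partial>lebesgue) \<le> 1" by simp
  have "norm_1G GG f = luxemburg GG h" by (simp add: norm_1G_def h_def[abs_def])
  also have "\<dots> \<le> ennreal 2" unfolding luxemburg_def
    by (rule Inf_lower) (use I in \<open>auto intro!: exI[of _ "2::real"]\<close>)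
  finally show ?thesis by simp
qed



lemma lvl_empty: fixes f :: "real \<Rightarrow> real" assumes "\<And>y. y \<ge> 0 \<Longrightarrow> \<bar>f y\<bar> < \<tau>"
  shows "{y\<in>{0..}. \<tau> \<le> \<bar>f y\<bar>} = {}"
proof (rule equals0I)
  fix y assume y: "y \<in> {y\<in>{0..}. \<tau> \<le> \<bar>f y\<bar>}"
  then have "\<bar>f y\<bar> < \<tau>" using assms by auto
  with y show False by simp
qed

lemma rearr_FF0: "x > 0 \<Longrightarrow> rearr FF x \<le> ereal (tt 0)"
proof (rule rearr_le)
  fix \<tau> assume x: "x > 0" and t: "\<tau> > tt 0"
  have E: "{y\<in>{0..}. \<tau> \<le> \<bar>FF y\<bar>} = {}"
  proof (rule lvl_empty)
    fix y show "\<bar>FF y\<bar> < \<tau>" using FF_le1[of y] FF_pos[of y] t by simp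
  qed
  show "emeasure (lebesgue_on {0..}) {y\<in>{0..}. \<tau> \<le> \<bar>FF y\<bar>} < ennreal x" unfolding E using x by simp
qed

lemma rearr_FFj: "x > 3/2 * sq j \<Longrightarrow> rearr FF x \<le> ereal (tt (Suc j))"
proof (rule rearr_le)
  fix \<tau> assume x: "x > 3/2 * sq j" and t: "\<tau> > tt (Suc j)"
  have sub: "{y\<in>{0..}. \<tau> \<le> \<bar>FF y\<bar>} \<subseteq> {0..<sq j}"
  proof
    fix y assume y: "y \<in> {y\<in>{0..}. \<tau> \<le> \<bar>FF y\<bar>}"
    have "\<not> sq j \<le> y"
    proof
      assume "sq j \<le> y"
      then have "FF y \<le> tt (Suc j)" by (rule FF_le)
      then show False using y t FF_pos[of y] by simp
    qed
    then show "y \<in> {0..<sq j}" using y by simp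
  qed
  have "emeasure (lebesgue_on {0..}) {y\<in>{0..}. \<tau> \<le> \<bar>FF y\<bar>} \<le> emeasure lebesgue {0..<sq j}"
    by (rule meas_lebesgue_on[OF sub]) auto
  also have "\<dots> = ennreal (sq j)" using sq_pos[of j] by simp
  also have "\<dots> < ennreal x" using x sq_pos[of j] by (intro ennreal_lessI) auto
  finally show "emeasure (lebesgue_on {0..}) {y\<in>{0..}. \<tau> \<le> \<bar>FF y\<bar>} < ennreal x" .
qed

lemma rearr_gg0: "x > 0 \<Longrightarrow> rearr gg x \<le> ereal (tt 0)"
proof (rule rearr_le)
  fix \<tau> assume x: "x > 0" and t: "\<tau> > tt 0"
  have E: "{y\<in>{0..}. \<tau> \<le> \<bar>gg y\<bar>} = {}"
  proof (rule lvl_empty)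
    fix y :: real assume "y \<ge> 0" then show "\<bar>gg y\<bar> < \<tau>" using gg_le[of y] gg_nonneg[of y] t by simp
  qed
  show "emeasure (lebesgue_on {0..}) {y\<in>{0..}. \<tau> \<le> \<bar>gg y\<bar>} < ennreal x" unfolding E using x by simp
qed

lemma rearr_ggj: "x > 3/2 * sq j \<Longrightarrow> rearr gg x \<le> ereal (tt (Suc j))"
proof (rule rearr_le)
  fix \<tau> assume x: "x > 3/2 * sq j" and t: "\<tau> > tt (Suc j)"
  have sub: "{y\<in>{0..}. \<tau> \<le> \<bar>gg y\<bar>} \<subseteq> {0..<sq j / 2} \<union> {sq j..<2 * sq j}"
  proof
    fix y assume y: "y \<in> {y\<in>{0..}. \<tau> \<le> \<bar>gg y\<bar>}"
    then have "y \<ge> 0" "\<tau> \<le> \<bar>gg y\<bar>" by auto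
    from gg_level[OF this(1) t this(2)] show "y \<in> {0..<sq j / 2} \<union> {sq j..<2 * sq j}"
      using \<open>y \<ge> 0\<close> by auto
  qed
  have "emeasure (lebesgue_on {0..}) {y\<in>{0..}. \<tau> \<le> \<bar>gg y\<bar>} \<le> emeasure lebesgue ({0..<sq j / 2} \<union> {sq j..<2 * sq j})"
    by (rule meas_lebesgue_on[OF sub]) (use sq_pos[of j] in auto)
  also have "\<dots> \<le> emeasure lebesgue {0..<sq j / 2} + emeasure lebesgue {sq j..<2 * sq j}"
    by (rule emeasure_subadditive) auto
  also have "\<dots> = ennreal (sq j / 2) + ennreal (sq j)" using sq_pos[of j] by simp
  also have "\<dots> = ennreal (3/2 * sq j)" using sq_pos[of j] by (simp add: ennreal_plus[symmetric])
  also have "\<dots> < ennreal x" using x sq_pos[of j] by (intro ennreal_lessI) auto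
  finally show "emeasure (lebesgue_on {0..}) {y\<in>{0..}. \<tau> \<le> \<bar>gg y\<bar>} < ennreal x" .
qed

lemma rearr_Hj: assumes "x \<le> 2 * sq j" shows "ereal (tt j) \<le> rearr (\<lambda>y. FF (y/2)) x"
proof (rule rearr_ge)
  have sub: "{0..<2 * sq j} \<subseteq> {y\<in>{0..}. tt j \<le> \<bar>FF (y/2)\<bar>}"
  proof
    fix y assume "y \<in> {0..<2 * sq j}"
    then have "y \<ge> 0" "y/2 < sq j" by auto
    then show "y \<in> {y\<in>{0..}. tt j \<le> \<bar>FF (y/2)\<bar>}" using FF_ge[of "y/2" j] FF_pos[of "y/2"] by simp
  qed
  have "ennreal x \<le> ennreal (2 * sq j)" using assms by (rule ennreal_leI)
  also have "\<dots> = emeasure lebesgue {0..<2 * sq j}" using sq_pos[of j] by simp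
  also have "\<dots> = emeasure (lebesgue_on {0..}) {0..<2 * sq j}"
    by (rule emeasure_restrict_space[symmetric]) auto
  also have "\<dots> \<le> emeasure (lebesgue_on {0..}) {y\<in>{0..}. tt j \<le> \<bar>FF (y/2)\<bar>}"
    by (rule emeasure_mono[OF sub lvl_meas[OF FF2_meas]])
  finally show "ennreal x \<le> emeasure (lebesgue_on {0..}) {y\<in>{0..}. tt j \<le> \<bar>FF (y/2)\<bar>}" .
qed

lemma term_lower:
  assumes c: "c > 0" and j: "real j \<ge> c"
  shows "GG (tt j / c) * (WW (2 * sq j) - WW (sq j)) \<ge> 1 / (2 * c)"
proof -
  have tj: "tt j > 0" and w0: "ww j > 0" and w1: "ww (Suc j) > 0" using tt_pos ww_pos by auto
  have "sq (Suc j) \<ge> (2 * real j + 2) * sq j" by (rule sq_Suc_ratio)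
  then have "1 / sq (Suc j) \<le> 1 / ((2 * real j + 2) * sq j)"
    using sq_pos[of j] sq_pos[of "Suc j"] by (intro divide_left_mono) auto
  then have "tt (Suc j) \<le> tt j / (2 * real j + 2)"
    unfolding tt_def by (simp add: mult.commute)
  also have "\<dots> \<le> 3 * tt j / (2 * c)"
  proof -
    have "2*c \<le> 3*(2*real j+2)" using j by simp
    then have "3*tt j/(3*(2*real j+2)) \<le> 3*tt j/(2*c)"
      using c tj by (intro divide_left_mono) auto
    moreover have "3*tt j/(3*(2*real j+2)) = tt j / (2 * real j + 2)"
      by (rule mult_divide_mult_cancel_left) simp
    ultimately show ?thesis by simp
  qed
  finally have "tt j / c \<ge> 2 * tt (Suc j) / 3" using c by (simp add: field_simps)
  then have g1: "GG (tt j / c) \<ge> (tt j / c) * ww (Suc j)" by (rule GG_ge_ww)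
  have W2: "WW (2 * sq j) = 1 / GG (tt j / 2)" by (rule WW_sq) simp
  have W1: "WW (sq j) = 1 / GG (tt j)" using WW_sq[of 1 j] by simp
  have a: "GG (tt j / 2) \<le> tt j * ww (Suc j)" by (rule GG_tt_half)
  have a0: "GG (tt j / 2) > 0" using tj by (intro GG_pos) simp
  have b: "GG (tt j) \<ge> tt j * ww j" using GG_ge_ww[of j "tt j"] tj by simp
  have e1: "1 / GG (tt j / 2) \<ge> 1 / (tt j * ww (Suc j))"
    using a a0 by (intro divide_left_mono) auto
  have e2: "1 / GG (tt j) \<le> 1 / (tt j * ww j)"
    using b tj w0 GG_pos[of "tt j"] by (intro divide_left_mono) auto
  have e3: "1 / (tt j * ww j) \<le> 1 / (2 * tt j * ww (Suc j))"
    using ww_Suc_le[of j] tj w1 by (intro divide_left_mono) (auto simp: field_simps)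
  have d: "WW (2 * sq j) - WW (sq j) \<ge> 1 / (2 * tt j * ww (Suc j))"
  proof -
    have "1 / (tt j * ww (Suc j)) = 2 * (1 / (2 * tt j * ww (Suc j)))" by simp
    then show ?thesis unfolding W1 W2 using e1 e2 e3 by linarith
  qed
  have "1 / (2 * c) = (tt j / c * ww (Suc j)) * (1 / (2 * tt j * ww (Suc j)))"
    using c tj w1 by (simp add: field_simps)
  also have "\<dots> \<le> GG (tt j / c) * (WW (2 * sq j) - WW (sq j))"
    using g1 d tj w1 c GG_nonneg[of "tt j / c"] by (intro mult_mono) auto
  finally show ?thesis .
qed



lemma two_sq_le: "j < k \<Longrightarrow> 2 * sq j \<le> sq k"
proof -
  assume "j < k"
  then have "Suc j \<le> k" by simp
  then have "sq (Suc j) \<le> sq k" by (rule sq_mono)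
  moreover have "sq (Suc j) \<ge> 4 * sq j" by (rule sq_Suc_ge)
  ultimately show ?thesis using sq_pos[of j] by simp
qed

lemma A_disj: assumes "x \<in> {WW (sq j)..<WW (2 * sq j)}" "x \<in> {WW (sq k)..<WW (2 * sq k)}"
  shows "j = k"
proof (rule ccontr)
  assume "j \<noteq> k"
  then consider "j < k" | "k < j" by linarith
  then show False
  proof cases
    case 1
    then have "WW (2 * sq j) \<le> WW (sq k)" using sq_pos[of j] by (intro WW_mono two_sq_le) auto
    then show False using assms by simp
  next
    case 2
    then have "WW (2 * sq k) \<le> WW (sq j)" using sq_pos[of k] by (intro WW_mono two_sq_le) auto
    then show False using assms by simp
  qed
qed

lemma H_int_big:
  assumes c: "c > 0"
  shows "(\<integral>\<^sup>+x\<in>{0..}. G_ext GG (rearr (\<lambda>y. FF (y/2)) (phi_inv WW x) / ereal c) \<partial>lebesgue) > 1"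
proof -
  define N0 where "N0 = nat \<lceil>c\<rceil>"
  define M where "M = nat \<lceil>2*c\<rceil> + 1"
  define S where "S = {N0..<N0+M}"
  define A where "A j = {WW (sq j)..<WW (2 * sq j)}" for j
  define h where "h x = rearr (\<lambda>y. FF (y/2)) (phi_inv WW x)" for x
  define tm where "tm j = GG (tt j / c) * (WW (2 * sq j) - WW (sq j))" for j
  define \<psi> where "\<psi> x = (\<Sum>j\<in>S. ennreal (GG (tt j / c)) * indicator (A j) x)" for x
  have pw: "\<psi> x \<le> G_ext GG (h x / ereal c) * indicator {0..} x" for x
  proof (cases "\<exists>k\<in>S. x \<in> A k")
    case False
    have "\<psi> x = 0" unfolding \<psi>_def
    proof (intro sum.neutral ballI)
      fix j assume "j \<in> S"
      then have "x \<notin> A j" using False by blast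
      then show "ennreal (GG (tt j / c)) * indicator (A j) x = 0" by simp
    qed
    then show ?thesis by simp
  next
    case True
    then obtain k where k: "k \<in> S" "x \<in> A k" by blast
    have "\<psi> x = (\<Sum>j\<in>S. (if j = k then ennreal (GG (tt k / c)) else 0))"
      unfolding \<psi>_def
    proof (rule sum.cong[OF refl])
      fix j assume "j \<in> S"
      show "ennreal (GG (tt j / c)) * indicator (A j) x = (if j = k then ennreal (GG (tt k / c)) else 0)"
      proof (cases "j = k")
        case True then show ?thesis using k(2) by simp
      next
        case False
        then have "x \<notin> A j" using A_disj[of x j k] k(2) unfolding A_def by blast
        then show ?thesis using False by simp
      qed
    qed
    also have "\<dots> = ennreal (GG (tt k / c))"
      using k(1) sum.delta[of S k "\<lambda>_. ennreal (GG (tt k / c))"] by (simp add: S_def)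
    finally have psi: "\<psi> x = ennreal (GG (tt k / c))" .
    have xw: "WW (sq k) \<le> x" "x < WW (2 * sq k)" using k(2) by (auto simp: A_def)
    have x0: "x > 0" using xw(1) WW_pos[of "sq k"] sq_pos[of k] by simp
    have "phi_inv WW x \<le> 2 * sq k"
      using x0 xw(2) sq_pos[of k] by (intro phi_inv_le) auto
    then have "ereal (tt k) \<le> h x" unfolding h_def by (rule rearr_Hj)
    then have "ereal (tt k / c) \<le> h x / ereal c" using c by (rule ediv_ge)
    then have "ennreal (GG (tt k / c)) \<le> G_ext GG (h x / ereal c)" by (rule G_ext_ge)
    then show ?thesis using psi x0 by simp
  qed
  have I1: "(\<integral>\<^sup>+x. \<psi> x \<partial>lebesgue) \<le> (\<integral>\<^sup>+x\<in>{0..}. G_ext GG (h x / ereal c) \<partial>lebesgue)"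
    by (rule nn_integral_mono) (rule pw)
  have I2: "(\<integral>\<^sup>+x. \<psi> x \<partial>lebesgue) = (\<Sum>j\<in>S. ennreal (tm j))"
  proof -
    have "(\<integral>\<^sup>+x. \<psi> x \<partial>lebesgue) = (\<Sum>j\<in>S. \<integral>\<^sup>+x. ennreal (GG (tt j / c)) * indicator (A j) x \<partial>lebesgue)"
      unfolding \<psi>_def
    proof (rule nn_integral_sum)
      fix j
      have "(\<lambda>x. ennreal (GG (tt j / c)) * indicator (A j) x) \<in> borel_measurable lborel"
        unfolding A_def by measurable
      then show "(\<lambda>x. ennreal (GG (tt j / c)) * indicator (A j) x) \<in> borel_measurable lebesgue"
        by (rule measurable_completion)
    qed
    also have "\<dots> = (\<Sum>j\<in>S. ennreal (tm j))"
    proof (rule sum.cong[OF refl])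
      fix j
      have le: "WW (sq j) \<le> WW (2 * sq j)" using sq_pos[of j] by (intro WW_mono) auto
      have "(\<integral>\<^sup>+x. ennreal (GG (tt j / c)) * indicator (A j) x \<partial>lebesgue)
          = ennreal (GG (tt j / c)) * emeasure lebesgue (A j)"
        by (rule nn_integral_cmult_indicator) (simp add: A_def)
      also have "\<dots> = ennreal (tm j)"
        using le GG_nonneg[of "tt j / c"] tt_pos[of j] c
        by (simp add: A_def tm_def ennreal_mult)
      finally show "(\<integral>\<^sup>+x. ennreal (GG (tt j / c)) * indicator (A j) x \<partial>lebesgue) = ennreal (tm j)" .
    qed
    finally show ?thesis .
  qed
  have tm_ge: "tm j \<ge> 1 / (2 * c)" if "j \<in> S" for j
  proof -
    have "N0 \<le> j" using that by (simp add: S_def)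
    then have "real N0 \<le> real j" by simp
    moreover have "c \<le> real N0" unfolding N0_def by (rule real_nat_ceiling_ge)
    ultimately have "real j \<ge> c" by linarith
    then show ?thesis unfolding tm_def by (rule term_lower[OF c])
  qed
  have tm0: "0 \<le> tm j" if "j \<in> S" for j
  proof -
    have "tm j \<ge> 1 / (2 * c)" using that by (rule tm_ge)
    moreover have "1 / (2 * c) > 0" using c by simp
    ultimately show ?thesis by linarith
  qed
  have se: "(\<Sum>j\<in>S. ennreal (tm j)) = ennreal (\<Sum>j\<in>S. tm j)"
    by (rule sum_ennreal) (rule tm0)
  have gt: "(\<Sum>j\<in>S. tm j) > 1"
  proof -
    have s1: "(\<Sum>j\<in>S. tm j) \<ge> (\<Sum>j\<in>S. 1 / (2 * c))" by (rule sum_mono) (rule tm_ge)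
    have s2: "(\<Sum>j\<in>S. 1 / (2 * c)) = real M / (2 * c)" by (simp add: S_def)
    have "real (nat \<lceil>2*c\<rceil>) \<ge> 2 * c" by (rule real_nat_ceiling_ge)
    then have "real M > 2 * c" unfolding M_def by simp
    then have "real M / (2 * c) > 1" using c by simp
    then show ?thesis using s1 s2 by linarith
  qed
  have "(1::ennreal) = ennreal 1" by simp
  also have "\<dots> < ennreal (\<Sum>j\<in>S. tm j)" using gt by (intro ennreal_lessI) auto
  also have "\<dots> = (\<integral>\<^sup>+x. \<psi> x \<partial>lebesgue)" using se I2 by simp
  also have "\<dots> \<le> (\<integral>\<^sup>+x\<in>{0..}. G_ext GG (h x / ereal c) \<partial>lebesgue)" by (rule I1)
  finally show ?thesis unfolding h_def .
qed

lemma H_norm: "norm_1G GG (\<lambda>y. FF (y/2)) = top"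
  unfolding norm_1G_def luxemburg_def Inf_top_conv
proof (intro ballI)
  fix u assume "u \<in> {ennreal c |c. c > 0 \<and> (\<integral>\<^sup>+x\<in>{0..}. G_ext GG (rearr (\<lambda>y. FF (y/2)) (phi_inv WW x) / ereal c) \<partial>lebesgue) \<le> 1}"
  then obtain c where "c > 0" "(\<integral>\<^sup>+x\<in>{0..}. G_ext GG (rearr (\<lambda>y. FF (y/2)) (phi_inv WW x) / ereal c) \<partial>lebesgue) \<le> 1"
    by blast
  with H_int_big[of c] have False by simp
  then show "u = top" ..
qed

theorem theorem4p2:
  shows "\<exists>G. phi_function G \<and> dilatory G \<and> \<not> quasi_banach (L_1G G) (norm_1G G)"
proof (intro exI[of _ GG] conjI)
  show "phi_function GG" by (rule phi_GG)
  show "dilatory GG" by (rule dil_GG)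
  show "\<not> quasi_banach (L_1G GG) (norm_1G GG)"
  proof
    assume q: "quasi_banach (L_1G GG) (norm_1G GG)"
    have F: "FF \<in> L_1G GG"
    proof -
      have "norm_1G GG FF \<le> 2" by (rule norm_upper[OF rearr_FF0 rearr_FFj])
      then have "norm_1G GG FF < \<infinity>" by (simp add: order_le_less_trans)
      then show ?thesis using FF_meas by (simp add: L_1G_def)
    qed
    have g: "gg \<in> L_1G GG"
    proof -
      have "norm_1G GG gg \<le> 2" by (rule norm_upper[OF rearr_gg0 rearr_ggj])
      then have "norm_1G GG gg < \<infinity>" by (simp add: order_le_less_trans)
      then show ?thesis using gg_meas by (simp add: L_1G_def)
    qed
    from q F g have "(\<lambda>x. FF x + gg x) \<in> L_1G GG" unfolding quasi_banach_def by blast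
    moreover have "(\<lambda>x. FF x + gg x) = (\<lambda>y. FF (y/2))" by (simp add: gg_def)
    ultimately have "norm_1G GG (\<lambda>y. FF (y/2)) < \<infinity>" by (simp add: L_1G_def)
    then show False using H_norm by simp
  qed
qed


end
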